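(* Let $n,m$ be positive integers and $d=nm$. Let $\boldsymbol\alpha,\boldsymbol\beta\in\mathbb{R}^m_{\geq 0}$ be such that $\mathbf a=(\boldsymbol\alpha^\top,\dots,\boldsymbol\alpha^\top)^\top\in\mathbb{R}^d$ and $\mathbf b=(\boldsymbol\beta^\top,\dots,\boldsymbol\beta^\top)^\top\in\mathbb{R}^d$ ($n$ stacked copies each) are probability vectors. Let $\mathbf C_0,\dots,\mathbf C_{n-1}\in\mathbb{R}^{m\times m}_{\geq 0}$ and let $\mathbf C\in\mathbb{R}^{d\times d}$ be the block-circulant matrix whose $(r,s)$-th $m\times m$ block ($0\le r,s\le n-1$) is $\mathbf C_{(s-r)\bmod n}$. Let $\phi:\mathbb{R}\to\mathbb{R}\cup\{+\infty\}$ be convex with $\phi(x)=+\infty$ for $x<0$. Consider the problem $$\min_{\mathbf T\in\mathbb{R}^{d\times d}} \langle \mathbf C,\mathbf T\rangle+\sum_{i,j=0}^{d-1}\phi(T_{ij})\quad\text{s.t.}\quad \mathbf T\mathbf 1_d=\mathbf a,\ \ \mathbf T^\top\mathbf 1_d=\mathbf b,$$ and suppose it has an optimal solution. Then there exists an optimal solution $\mathbf T$ of this problem that is block-circulant, i.e. there are $\mathbf T_0,\dots,\mathbf T_{n-1}\in\mathbb{R}^{m\times m}_{\geq 0}$ such that the $(r,s)$-th $m\times m$ block of $\mathbf T$ is $\mathbf T_{(s-r)\bmod n}$ for all $0\le r,s\le n-1$.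
   Context: $\langle\mathbf X,\mathbf Y\rangle=\sum_{i,j}X_{ij}Y_{ij}$ is the Frobenius inner product, and $\mathbf 1_d$ is the all-ones vector in $\mathbb{R}^d$. Block-circulant means the first block row is $(\mathbf C_0,\mathbf C_1,\dots,\mathbf C_{n-1})$ and each subsequent block row is the cyclic shift of the previous one by one block to the right. *)

theory Defs
  imports "HOL-Analysis.Analysis" "HOL-Library.Extended_Real"
begin

text \<open>Matrices of size d x d are functions nat => nat => real, only entries
 with indices < d are relevant. Index i of R^d = R^(nm) is written i = r*m + p
 with block index r < n and inner index p < m.\<close>

definition ext_convex :: "(real \<Rightarrow> ereal) \<Rightarrow> bool" where
  "ext_convex \<phi> \<longleftrightarrow>
     (\<forall>x y t. 0 \<le> t \<and> t \<le> 1 \<longrightarrow>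
        \<phi> (t * x + (1 - t) * y) \<le> ereal t * \<phi> x + ereal (1 - t) * \<phi> y)"

definition stack :: "nat \<Rightarrow> (nat \<Rightarrow> real) \<Rightarrow> nat \<Rightarrow> real" where
  "stack m \<alpha> i = \<alpha> (i mod m)"

definition prob_vec :: "nat \<Rightarrow> (nat \<Rightarrow> real) \<Rightarrow> bool" where
  "prob_vec d v \<longleftrightarrow> (\<forall>i<d. 0 \<le> v i) \<and> (\<Sum>i<d. v i) = 1"

definition block_circulant ::
  "nat \<Rightarrow> nat \<Rightarrow> (nat \<Rightarrow> nat \<Rightarrow> real) \<Rightarrow> (nat \<Rightarrow> nat \<Rightarrow> nat \<Rightarrow> real) \<Rightarrow> bool" where
  "block_circulant n m M B \<longleftrightarrow>
     (\<forall>r<n. \<forall>s<n. \<forall>p<m. \<forall>q<m.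
        M (r * m + p) (s * m + q) = B (nat ((int s - int r) mod int n)) p q)"

definition frob :: "nat \<Rightarrow> (nat \<Rightarrow> nat \<Rightarrow> real) \<Rightarrow> (nat \<Rightarrow> nat \<Rightarrow> real) \<Rightarrow> real" where
  "frob d X Y = (\<Sum>i<d. \<Sum>j<d. X i j * Y i j)"

definition objective ::
  "nat \<Rightarrow> (nat \<Rightarrow> nat \<Rightarrow> real) \<Rightarrow> (real \<Rightarrow> ereal) \<Rightarrow> (nat \<Rightarrow> nat \<Rightarrow> real) \<Rightarrow> ereal" where
  "objective d C \<phi> T = ereal (frob d C T) + (\<Sum>i<d. \<Sum>j<d. \<phi> (T i j))"

definition feasible ::
  "nat \<Rightarrow> (nat \<Rightarrow> real) \<Rightarrow> (nat \<Rightarrow> real) \<Rightarrow> (nat \<Rightarrow> nat \<Rightarrow> real) \<Rightarrow> bool" where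
  "feasible d a b T \<longleftrightarrow> (\<forall>i<d. (\<Sum>j<d. T i j) = a i) \<and> (\<forall>j<d. (\<Sum>i<d. T i j) = b j)"

definition optimal ::
  "nat \<Rightarrow> (nat \<Rightarrow> nat \<Rightarrow> real) \<Rightarrow> (real \<Rightarrow> ereal) \<Rightarrow> (nat \<Rightarrow> real) \<Rightarrow> (nat \<Rightarrow> real)
     \<Rightarrow> (nat \<Rightarrow> nat \<Rightarrow> real) \<Rightarrow> bool" where
  "optimal d C \<phi> a b T \<longleftrightarrow> feasible d a b T \<and>
     (\<forall>T'. feasible d a b T' \<longrightarrow> objective d C \<phi> T \<le> objective d C \<phi> T')"

end

theory Submission
  imports Defs
begin

lemma rot_inj:
  fixes x y c N :: nat
  assumes "x < N" "y < N" "(x + c) mod N = (y + c) mod N"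
  shows "x = y"
proof -
  have "int ((x + c) mod N) = int ((y + c) mod N)" using assms(3) by (rule arg_cong)
  then have "(int x + int c) mod int N = (int y + int c) mod int N" by (simp only: of_nat_mod of_nat_add)
  then have "((int x + int c) + (- int c)) mod int N = ((int y + int c) + (- int c)) mod int N"
    by (rule mod_add_cong) (rule refl)
  then have "int x mod int N = int y mod int N" by simp
  then show ?thesis using assms(1,2) by simp
qed

definition sh :: "nat \<Rightarrow> nat \<Rightarrow> nat \<Rightarrow> nat \<Rightarrow> nat" where
  "sh n m k i = (i + k * m) mod (n * m)"

lemma rot_bij:
  assumes N: "0 < (N::nat)"
  shows "bij_betw (\<lambda>i. (i + c) mod N) {..<N} {..<N}"
proof -
  have inj: "inj_on (\<lambda>i. (i + c) mod N) {..<N}"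
  proof (rule inj_onI)
    fix x y assume "x \<in> {..<N}" "y \<in> {..<N}" "(x + c) mod N = (y + c) mod N"
    then show "x = y" using rot_inj by blast
  qed
  have "(\<lambda>i. (i + c) mod N) ` {..<N} \<subseteq> {..<N}" using N by auto
  then have "(\<lambda>i. (i + c) mod N) ` {..<N} = {..<N}" using inj by (intro endo_inj_surj) auto
  then show ?thesis using inj unfolding bij_betw_def by blast
qed

lemma rot_sum: "0 < (N::nat) \<Longrightarrow> (\<Sum>i<N. g ((i + c) mod N)) = (\<Sum>i<N. g i)"
  by (rule sum.reindex_bij_betw[OF rot_bij])

lemma sh_sum: "0 < n \<Longrightarrow> 0 < m \<Longrightarrow> (\<Sum>i<n*m. g (sh n m k i)) = (\<Sum>i<n*m. g i)"
  unfolding sh_def by (rule rot_sum) simp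

lemma sh_sum2:
  assumes "0 < n" "0 < m"
  shows "(\<Sum>i<n*m. \<Sum>j<n*m. g (sh n m k i) (sh n m k j)) = (\<Sum>i<n*m. \<Sum>j<n*m. g i j)"
proof -
  have "(\<Sum>i<n*m. \<Sum>j<n*m. g (sh n m k i) (sh n m k j)) = (\<Sum>i<n*m. \<Sum>j<n*m. g (sh n m k i) j)"
    by (rule sum.cong[OF refl], rule sh_sum[OF assms])
  also have "\<dots> = (\<Sum>i<n*m. \<Sum>j<n*m. g i j)"
    by (rule sh_sum[OF assms, of "\<lambda>i. \<Sum>j<n*m. g i j"])
  finally show ?thesis .
qed

lemma sh_sh: "sh n m k (sh n m c i) = sh n m ((k + c) mod n) i"
proof -
  have "sh n m k (sh n m c i) = (i + (k + c) * m) mod (n * m)"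
    unfolding sh_def using mod_add_left_eq[of "i + c * m" "n * m" "k * m"]
    by (simp add: algebra_simps)
  also have "\<dots> = (i + ((k + c) * m) mod (n * m)) mod (n * m)"
    by (rule mod_add_right_eq[symmetric])
  also have "((k + c) * m) mod (n * m) = ((k + c) mod n) * m"
    by (subst mod_mult_mult2) (rule refl)
  finally show ?thesis unfolding sh_def .
qed

lemma sh_decomp: "r < n \<Longrightarrow> p < m \<Longrightarrow> sh n m k (r * m + p) = ((r + k) mod n) * m + p"
proof -
  assume "r < n" "p < m"
  have "sh n m k (r * m + p) = ((r + k) * m + p) mod (m * n)"
    unfolding sh_def by (simp add: algebra_simps)
  also have "\<dots> = m * (((r + k) * m + p) div m mod n) + ((r + k) * m + p) mod m"
    by (rule mod_mult2_eq)
  also have "\<dots> = ((r + k) mod n) * m + p" using \<open>p < m\<close> by simp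
  finally show ?thesis .
qed

lemma sh_lt: "0 < n \<Longrightarrow> 0 < m \<Longrightarrow> sh n m k i < n * m"
  unfolding sh_def by simp

lemma sh_stack: "stack m \<alpha> (sh n m k i) = stack m \<alpha> i"
  unfolding sh_def stack_def
  by (simp add: mod_mod_cancel)

lemma C_inv:
  assumes bc: "block_circulant n m C Cb" and i: "i < n * m" and j: "j < n * m"
  shows "C (sh n m k i) (sh n m k j) = C i j"
proof -
  have m: "0 < m" using i by (cases m) auto
  define r p s q where "r = i div m" "p = i mod m" "s = j div m" "q = j mod m"
  have rn: "r < n" "s < n" using i j m unfolding r_p_s_q_def
    by (simp_all add: less_mult_imp_div_less)
  have pm: "p < m" "q < m" using m unfolding r_p_s_q_def by simp_all
  have ie: "i = r * m + p" "j = s * m + q" unfolding r_p_s_q_def by simp_all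
  have md: "(int ((s + k) mod n) - int ((r + k) mod n)) mod int n = (int s - int r) mod int n"
  proof -
    have "(int ((s + k) mod n) - int ((r + k) mod n)) mod int n
        = ((int s + int k) mod int n - (int r + int k) mod int n) mod int n"
      by (simp add: of_nat_mod)
    also have "\<dots> = ((int s + int k) - (int r + int k)) mod int n"
      by (rule mod_diff_eq)
    finally show ?thesis by simp
  qed
  have "(r + k) mod n < n" "(s + k) mod n < n" using rn by auto
  then show ?thesis
    unfolding ie sh_decomp[OF rn(1) pm(1)] sh_decomp[OF rn(2) pm(2)]
    using bc rn pm md unfolding block_circulant_def by simp
qed

lemma jensen:
  assumes cvx: "ext_convex \<phi>"
    and fin: "\<forall>k<Suc N. \<phi> (x k) \<noteq> \<infinity> \<and> \<phi> (x k) \<noteq> -\<infinity>"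
  shows "\<phi> ((\<Sum>k<Suc N. x k) / real (Suc N))
           \<le> ereal ((\<Sum>k<Suc N. real_of_ereal (\<phi> (x k))) / real (Suc N))"
  using fin
proof (induction N)
  case 0
  then show ?case by (cases "\<phi> (x 0)") auto
next
  case (Suc N)
  define S where "S = (\<Sum>k<Suc N. x k)"
  define A where "A = (\<Sum>k<Suc N. real_of_ereal (\<phi> (x k)))"
  define t where "t = real (Suc N) / real (Suc (Suc N))"
  define y where "y = x (Suc N)"
  have t01: "0 \<le> t" "t \<le> 1" unfolding t_def by auto
  have IH: "\<phi> (S / real (Suc N)) \<le> ereal (A / real (Suc N))"
    using Suc unfolding S_def A_def by simp
  have fy: "\<phi> y = ereal (real_of_ereal (\<phi> y))"
    using Suc.prems unfolding y_def by (cases "\<phi> (x (Suc N))") auto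
  have aux: "\<And>a b z. a \<noteq> 0 \<Longrightarrow> (a / b) * (z / a) = z / (b::real)" by simp
  have e1: "\<And>z. t * (z / real (Suc N)) = z / real (Suc (Suc N))"
    unfolding t_def by (rule aux) (simp only: of_nat_eq_0_iff nat.distinct(1) not_False_eq_True)
  have e2: "1 - t = 1 / real (Suc (Suc N))"
    unfolding t_def by (simp add: field_simps)
  have eq: "(\<Sum>k<Suc (Suc N). x k) / real (Suc (Suc N)) = t * (S / real (Suc N)) + (1 - t) * y"
    unfolding e1 e2 S_def y_def by (simp add: add_divide_distrib)
  have "\<phi> (t * (S / real (Suc N)) + (1 - t) * y)
        \<le> ereal t * \<phi> (S / real (Suc N)) + ereal (1 - t) * \<phi> y"
    using cvx t01 unfolding ext_convex_def by blast
  also have "\<dots> \<le> ereal t * ereal (A / real (Suc N)) + ereal (1 - t) * ereal (real_of_ereal (\<phi> y))"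
    apply (rule add_mono)
     apply (rule ereal_mult_left_mono[OF IH]) using t01 apply simp
    using fy by simp
  also have "\<dots> = ereal ((\<Sum>k<Suc (Suc N). real_of_ereal (\<phi> (x k))) / real (Suc (Suc N)))"
  proof -
    have "ereal t * ereal (A / real (Suc N)) + ereal (1 - t) * ereal (real_of_ereal (\<phi> y))
       = ereal (A / real (Suc (Suc N)) + real_of_ereal (\<phi> y) / real (Suc (Suc N)))"
      by (simp only: times_ereal.simps(1) plus_ereal.simps(1) e1 e2) simp
    also have "A / real (Suc (Suc N)) + real_of_ereal (\<phi> y) / real (Suc (Suc N))
       = (\<Sum>k<Suc (Suc N). real_of_ereal (\<phi> (x k))) / real (Suc (Suc N))"
      unfolding A_def y_def by (simp add: add_divide_distrib)
    finally show ?thesis .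
  qed
  finally show ?case using eq by simp
qed


lemma swap3: "(\<Sum>i\<in>A. \<Sum>j\<in>B. \<Sum>k\<in>K. g i j k) = (\<Sum>k\<in>K. \<Sum>i\<in>A. \<Sum>j\<in>B. g i j k)"
proof -
  have "(\<Sum>i\<in>A. \<Sum>j\<in>B. \<Sum>k\<in>K. g i j k) = (\<Sum>i\<in>A. \<Sum>k\<in>K. \<Sum>j\<in>B. g i j k)"
    by (rule sum.cong[OF refl], rule sum.swap)
  also have "\<dots> = (\<Sum>k\<in>K. \<Sum>i\<in>A. \<Sum>j\<in>B. g i j k)" by (rule sum.swap)
  finally show ?thesis .
qed

lemma avg3: "(\<Sum>i\<in>A. \<Sum>j\<in>B. (\<Sum>k\<in>K. F k i j) / (c::real)) = (\<Sum>k\<in>K. \<Sum>i\<in>A. \<Sum>j\<in>B. F k i j) / c"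
  unfolding sum_divide_distrib[symmetric] by (rule arg_cong[where f="\<lambda>x. x / c"], rule swap3)

theorem lemma1:
  fixes n m :: nat and \<alpha> \<beta> :: "nat \<Rightarrow> real"
    and Cb :: "nat \<Rightarrow> nat \<Rightarrow> nat \<Rightarrow> real"
    and C :: "nat \<Rightarrow> nat \<Rightarrow> real"
    and \<phi> :: "real \<Rightarrow> ereal"
  assumes "0 < n" and "0 < m"
    and "\<forall>p<m. 0 \<le> \<alpha> p" and "\<forall>p<m. 0 \<le> \<beta> p"
    and "prob_vec (n * m) (stack m \<alpha>)" and "prob_vec (n * m) (stack m \<beta>)"
    and "\<forall>k<n. \<forall>p<m. \<forall>q<m. 0 \<le> Cb k p q"
    and "block_circulant n m C Cb"
    and "ext_convex \<phi>" and "\<forall>x. \<phi> x \<noteq> -\<infinity>" and "\<forall>x<0. \<phi> x = \<infinity>"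
    and "\<exists>T. optimal (n * m) C \<phi> (stack m \<alpha>) (stack m \<beta>) T"
  shows "\<exists>T Tb. optimal (n * m) C \<phi> (stack m \<alpha>) (stack m \<beta>) T
           \<and> (\<forall>k<n. \<forall>p<m. \<forall>q<m. 0 \<le> Tb k p q)
           \<and> block_circulant n m T Tb"
proof -
  note n0 = assms(1) and m0 = assms(2)
  obtain T where opt: "optimal (n * m) C \<phi> (stack m \<alpha>) (stack m \<beta>) T" using assms(12) by blast
  have feasT: "feasible (n * m) (stack m \<alpha>) (stack m \<beta>) T" using opt unfolding optimal_def by blast
  have minT: "\<And>T'. feasible (n * m) (stack m \<alpha>) (stack m \<beta>) T' \<Longrightarrow>
      objective (n * m) C \<phi> T \<le> objective (n * m) C \<phi> T'" using opt unfolding optimal_def by blast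
  show ?thesis
  proof (cases "objective (n * m) C \<phi> T = \<infinity>")
    case True
    define P where "P i j = stack m \<alpha> i * stack m \<beta> j" for i j
    have sa: "(\<Sum>i<n*m. stack m \<alpha> i) = 1" using assms(5) unfolding prob_vec_def by blast
    have sb: "(\<Sum>i<n*m. stack m \<beta> i) = 1" using assms(6) unfolding prob_vec_def by blast
    have feas: "feasible (n * m) (stack m \<alpha>) (stack m \<beta>) P"
      unfolding feasible_def P_def
      by (simp add: sum_distrib_left[symmetric] sum_distrib_right[symmetric] sa sb)
    have "optimal (n * m) C \<phi> (stack m \<alpha>) (stack m \<beta>) P"
      unfolding optimal_def
    proof (intro conjI allI impI feas)
      fix T' assume fT': "feasible (n * m) (stack m \<alpha>) (stack m \<beta>) T'"
      have "objective (n * m) C \<phi> P \<le> \<infinity>" by (rule ereal_less_eq(1))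
      also have "\<dots> = objective (n * m) C \<phi> T" using True by (rule sym)
      also have "\<dots> \<le> objective (n * m) C \<phi> T'" by (rule minT[OF fT'])
      finally show "objective (n * m) C \<phi> P \<le> objective (n * m) C \<phi> T'" .
    qed
    moreover have "\<forall>k<n. \<forall>p<m. \<forall>q<m. 0 \<le> \<alpha> p * \<beta> q" using assms(3,4) by simp
    moreover have "block_circulant n m P (\<lambda>k p q. \<alpha> p * \<beta> q)"
      unfolding block_circulant_def P_def stack_def by simp
    ultimately show ?thesis by (intro exI[of _ P] exI[of _ "\<lambda>k p q. \<alpha> p * \<beta> q"]) simp
  next
    case False
    have finT: "\<phi> (T i j) \<noteq> \<infinity>" if "i < n * m" "j < n * m" for i j
    proof
      assume inf: "\<phi> (T i j) = \<infinity>"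
      have "(\<Sum>j<n*m. \<phi> (T i j)) = \<infinity>" using inf that by (auto simp: sum_Pinfty)
      then have "(\<Sum>i<n*m. \<Sum>j<n*m. \<phi> (T i j)) = \<infinity>" using that by (auto simp: sum_Pinfty)
      then show False using False unfolding objective_def by simp
    qed
    have fT: "\<phi> (T i j) = ereal (real_of_ereal (\<phi> (T i j)))" if "i < n * m" "j < n * m" for i j
      using finT[OF that] assms(10) by (cases "\<phi> (T i j)") auto
    obtain N where nN: "n = Suc N" using n0 by (cases n) auto
    define Tbar where "Tbar i j = (\<Sum>k<n. T (sh n m k i) (sh n m k j)) / real n" for i j
    have jen: "\<phi> (Tbar i j) \<le> ereal ((\<Sum>k<n. real_of_ereal (\<phi> (T (sh n m k i) (sh n m k j)))) / real n)" for i j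
    proof -
      have "\<forall>k<Suc N. \<phi> (T (sh n m k i) (sh n m k j)) \<noteq> \<infinity> \<and> \<phi> (T (sh n m k i) (sh n m k j)) \<noteq> -\<infinity>"
      proof (intro allI impI conjI)
        fix k assume "k < Suc N"
        show "\<phi> (T (sh n m k i) (sh n m k j)) \<noteq> \<infinity>"
          by (rule finT) (rule sh_lt[OF n0 m0])+
        show "\<phi> (T (sh n m k i) (sh n m k j)) \<noteq> -\<infinity>"
          using assms(10) by blast
      qed
      from jensen[OF assms(9) this] show ?thesis unfolding Tbar_def nN .
    qed
    have rowsum: "(\<Sum>j<n*m. Tbar i j) = stack m \<alpha> i" if "i < n * m" for i
    proof -
      have "(\<Sum>j<n*m. Tbar i j) = (\<Sum>k<n. \<Sum>j<n*m. T (sh n m k i) (sh n m k j)) / real n"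
        unfolding Tbar_def sum_divide_distrib[symmetric]
        by (rule arg_cong[where f="\<lambda>x. x / real n"], rule sum.swap)
      also have "\<dots> = (\<Sum>k<n. \<Sum>j<n*m. T (sh n m k i) j) / real n"
      proof -
        have "(\<Sum>j<n*m. T (sh n m k i) (sh n m k j)) = (\<Sum>j<n*m. T (sh n m k i) j)" for k
          by (rule sh_sum[OF n0 m0, of "\<lambda>j. T (sh n m k i) j" k])
        then show ?thesis by (simp only:)
      qed
      also have "\<dots> = (\<Sum>k<n. stack m \<alpha> i) / real n"
      proof -
        have fe: "(\<Sum>j<n*m. T i0 j) = stack m \<alpha> i0" if "i0 < n * m" for i0
          using feasT that unfolding feasible_def by blast
        have "(\<Sum>j<n*m. T (sh n m k i) j) = stack m \<alpha> i" for k
          using fe[OF sh_lt[OF n0 m0, of k i]] sh_stack[of m _ n k i] by simp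
        then show ?thesis by (simp only:)
      qed
      finally show ?thesis using n0 by simp
    qed
    have colsum: "(\<Sum>i<n*m. Tbar i j) = stack m \<beta> j" if "j < n * m" for j
    proof -
      have "(\<Sum>i<n*m. Tbar i j) = (\<Sum>k<n. \<Sum>i<n*m. T (sh n m k i) (sh n m k j)) / real n"
        unfolding Tbar_def sum_divide_distrib[symmetric]
        by (rule arg_cong[where f="\<lambda>x. x / real n"], rule sum.swap)
      also have "\<dots> = (\<Sum>k<n. \<Sum>i<n*m. T i (sh n m k j)) / real n"
      proof -
        have "(\<Sum>i<n*m. T (sh n m k i) (sh n m k j)) = (\<Sum>i<n*m. T i (sh n m k j))" for k
          by (rule sh_sum[OF n0 m0, of "\<lambda>i. T i (sh n m k j)" k])
        then show ?thesis by (simp only:)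
      qed
      also have "\<dots> = (\<Sum>k<n. stack m \<beta> j) / real n"
      proof -
        have fe: "(\<Sum>i<n*m. T i j0) = stack m \<beta> j0" if "j0 < n * m" for j0
          using feasT that unfolding feasible_def by blast
        have "(\<Sum>i<n*m. T i (sh n m k j)) = stack m \<beta> j" for k
          using fe[OF sh_lt[OF n0 m0, of k j]] sh_stack[of m _ n k j] by simp
        then show ?thesis by (simp only:)
      qed
      finally show ?thesis using n0 by simp
    qed
    have feas: "feasible (n * m) (stack m \<alpha>) (stack m \<beta>) Tbar"
      unfolding feasible_def using rowsum colsum by blast
    have frobeq: "frob (n*m) C Tbar = frob (n*m) C T"
    proof -
      have "frob (n*m) C Tbar = (\<Sum>i<n*m. \<Sum>j<n*m. (\<Sum>k<n. C i j * T (sh n m k i) (sh n m k j)) / real n)"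
        unfolding frob_def Tbar_def by (simp add: sum_distrib_left)
      also have "\<dots> = (\<Sum>k<n. \<Sum>i<n*m. \<Sum>j<n*m. C i j * T (sh n m k i) (sh n m k j)) / real n"
        by (rule avg3)
      also have "\<dots> = (\<Sum>k<n. \<Sum>i<n*m. \<Sum>j<n*m. C (sh n m k i) (sh n m k j) * T (sh n m k i) (sh n m k j)) / real n"
        using C_inv[OF assms(8)] by simp
      also have "\<dots> = (\<Sum>k<n. frob (n*m) C T) / real n"
        unfolding frob_def using sh_sum2[OF n0 m0, of "\<lambda>i j. C i j * T i j"] by simp
      finally show ?thesis using n0 by simp
    qed
    have phieq: "(\<Sum>i<n*m. \<Sum>j<n*m. (\<Sum>k<n. real_of_ereal (\<phi> (T (sh n m k i) (sh n m k j)))) / real n)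
        = (\<Sum>i<n*m. \<Sum>j<n*m. real_of_ereal (\<phi> (T i j)))"
    proof -
      have "(\<Sum>i<n*m. \<Sum>j<n*m. (\<Sum>k<n. real_of_ereal (\<phi> (T (sh n m k i) (sh n m k j)))) / real n)
        = (\<Sum>k<n. \<Sum>i<n*m. \<Sum>j<n*m. real_of_ereal (\<phi> (T (sh n m k i) (sh n m k j)))) / real n"
        by (rule avg3)
      also have "\<dots> = (\<Sum>k<n. \<Sum>i<n*m. \<Sum>j<n*m. real_of_ereal (\<phi> (T i j))) / real n"
        using sh_sum2[OF n0 m0, of "\<lambda>i j. real_of_ereal (\<phi> (T i j))"] by simp
      finally show ?thesis using n0 by simp
    qed
    have objT: "objective (n*m) C \<phi> T = ereal (frob (n*m) C T) + ereal (\<Sum>i<n*m. \<Sum>j<n*m. real_of_ereal (\<phi> (T i j)))"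
    proof -
      have "(\<Sum>i<n*m. \<Sum>j<n*m. \<phi> (T i j)) = (\<Sum>i<n*m. \<Sum>j<n*m. ereal (real_of_ereal (\<phi> (T i j))))"
        using fT by (intro sum.cong refl) auto
      then show ?thesis unfolding objective_def by simp
    qed
    have "objective (n*m) C \<phi> Tbar \<le> ereal (frob (n*m) C Tbar) +
        (\<Sum>i<n*m. \<Sum>j<n*m. ereal ((\<Sum>k<n. real_of_ereal (\<phi> (T (sh n m k i) (sh n m k j)))) / real n))"
      unfolding objective_def by (intro add_left_mono sum_mono jen)
    also have "\<dots> = objective (n*m) C \<phi> T"
      unfolding objT frobeq sum_ereal phieq ..
    finally have objle: "objective (n*m) C \<phi> Tbar \<le> objective (n*m) C \<phi> T" .
    have optb: "optimal (n * m) C \<phi> (stack m \<alpha>) (stack m \<beta>) Tbar"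
      unfolding optimal_def
    proof (intro conjI allI impI feas)
      fix T' assume fT': "feasible (n * m) (stack m \<alpha>) (stack m \<beta>) T'"
      show "objective (n * m) C \<phi> Tbar \<le> objective (n * m) C \<phi> T'"
        using objle minT[OF fT'] by (rule order_trans)
    qed
    have nonneg: "0 \<le> Tbar i j" for i j
    proof (rule ccontr)
      assume "\<not> 0 \<le> Tbar i j"
      then have "\<phi> (Tbar i j) = \<infinity>" using assms(11) by simp
      then show False using jen[of i j] by simp
    qed
    have inv: "Tbar (sh n m c i) (sh n m c j) = Tbar i j" for c i j
      unfolding Tbar_def sh_sh using rot_sum[OF n0, of "\<lambda>k. T (sh n m k i) (sh n m k j)" c] by simp
    have bc: "block_circulant n m Tbar (\<lambda>k p q. Tbar p (k * m + q))"
      unfolding block_circulant_def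
    proof (intro allI impI)
      fix r s p q assume rs: "r < n" "s < n" and pq: "p < m" "q < m"
      have e1: "sh n m (n - r) (r * m + p) = p" using sh_decomp[OF rs(1) pq(1)] rs by simp
      have im: "int ((s + (n - r)) mod n) = (int s - int r) mod int n"
      proof -
        have ii: "int (s + (n - r)) = (int s - int r) + int n"
          using rs by (simp add: of_nat_diff less_imp_le_nat)
        have "int ((s + (n - r)) mod n) = int (s + (n - r)) mod int n"
          by (rule of_nat_mod)
        also have "\<dots> = ((int s - int r) + int n) mod int n" by (simp only: ii)
        finally have "int ((s + (n - r)) mod n) = ((int s - int r) + int n) mod int n" .
        also have "\<dots> = (int s - int r) mod int n" by (rule mod_add_self2)
        finally show ?thesis .
      qed
      have e2: "sh n m (n - r) (s * m + q) = nat ((int s - int r) mod int n) * m + q"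
        using sh_decomp[OF rs(2) pq(2)] im by (metis nat_int)
      show "Tbar (r * m + p) (s * m + q) = Tbar p (nat ((int s - int r) mod int n) * m + q)"
        using inv[of "n - r" "r * m + p" "s * m + q"] e1 e2 by simp
    qed
    show ?thesis
      by (rule exI[of _ Tbar], rule exI[of _ "\<lambda>k p q. Tbar p (k * m + q)"]) (simp add: optb bc nonneg)
  qed
qed

end
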